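(* Let $n\ge2$ and let $u$ be a polar $n$-complex number. Then, with $\exp w=\sum_{j\ge0}w^j/j!$, for even $n$ $$e^u=e_+e^{v_+}+e_-e^{v_-}+\sum_{k=1}^{n/2-1}e^{v_k}\big(e_k\cos\tilde v_k+\tilde e_k\sin\tilde v_k\big),$$ and for odd $n$ $$e^u=e_+e^{v_+}+\sum_{k=1}^{(n-1)/2}e^{v_k}\big(e_k\cos\tilde v_k+\tilde e_k\sin\tilde v_k\big).$$
   Context: Polar $n$-complex numbers: $u=x_0+h_1x_1+\cdots+h_{n-1}x_{n-1}$, $x_j\in\mathbb{R}$, $h_0=1$, componentwise addition, bilinear multiplication $h_jh_k=h_{(j+k)\bmod n}$. Canonical variables: $v_+=\sum_px_p$; for even $n$, $v_-=\sum_p(-1)^px_p$; $v_k=\sum_px_p\cos(2\pi kp/n)$, $\tilde v_k=\sum_px_p\sin(2\pi kp/n)$ for $k=1,\dots,\lfloor(n-1)/2\rfloor$. Canonical base: $e_+=\frac1n\sum_ph_p$, $e_-=\frac1n\sum_p(-1)^ph_p$ (even $n$), $e_k=\frac2n\sum_p\cos(2\pi kp/n)h_p$, $\tilde e_k=\frac2n\sum_p\sin(2\pi kp/n)h_p$. *)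

theory Defs
  imports Complex_Main
begin

text \<open>A polar n-complex number u = x_0 + h_1 x_1 + ... + h_{n-1} x_{n-1} is represented
  by its component function x :: nat => real; only the components x 0, ..., x (n-1) matter.\<close>

definition pc_mult :: "nat \<Rightarrow> (nat \<Rightarrow> real) \<Rightarrow> (nat \<Rightarrow> real) \<Rightarrow> (nat \<Rightarrow> real)" where
  "pc_mult n u w = (\<lambda>m. \<Sum>j<n. \<Sum>k<n. if (j + k) mod n = m then u j * w k else 0)"

definition pc_one :: "nat \<Rightarrow> real" where
  "pc_one = (\<lambda>m. if m = 0 then 1 else 0)"

fun pc_pow :: "nat \<Rightarrow> (nat \<Rightarrow> real) \<Rightarrow> nat \<Rightarrow> (nat \<Rightarrow> real)" where
  "pc_pow n u 0 = pc_one"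
| "pc_pow n u (Suc j) = pc_mult n u (pc_pow n u j)"

definition v_plus :: "nat \<Rightarrow> (nat \<Rightarrow> real) \<Rightarrow> real" where
  "v_plus n x = (\<Sum>p<n. x p)"
definition v_minus :: "nat \<Rightarrow> (nat \<Rightarrow> real) \<Rightarrow> real" where
  "v_minus n x = (\<Sum>p<n. (-1) ^ p * x p)"
definition v_k :: "nat \<Rightarrow> (nat \<Rightarrow> real) \<Rightarrow> nat \<Rightarrow> real" where
  "v_k n x k = (\<Sum>p<n. x p * cos (2 * pi * real k * real p / real n))"
definition vt_k :: "nat \<Rightarrow> (nat \<Rightarrow> real) \<Rightarrow> nat \<Rightarrow> real" where
  "vt_k n x k = (\<Sum>p<n. x p * sin (2 * pi * real k * real p / real n))"

definition e_plus :: "nat \<Rightarrow> nat \<Rightarrow> real" where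
  "e_plus n = (\<lambda>p. if p < n then 1 / real n else 0)"
definition e_minus :: "nat \<Rightarrow> nat \<Rightarrow> real" where
  "e_minus n = (\<lambda>p. if p < n then (-1) ^ p / real n else 0)"
definition e_k :: "nat \<Rightarrow> nat \<Rightarrow> nat \<Rightarrow> real" where
  "e_k n k = (\<lambda>p. if p < n then 2 / real n * cos (2 * pi * real k * real p / real n) else 0)"
definition et_k :: "nat \<Rightarrow> nat \<Rightarrow> nat \<Rightarrow> real" where
  "et_k n k = (\<lambda>p. if p < n then 2 / real n * sin (2 * pi * real k * real p / real n) else 0)"

end

theory Submission
  imports Defs
begin

definition om :: "nat \<Rightarrow> complex" where "om n = cis (2*pi/real n)"
definition lam :: "nat \<Rightarrow> (nat\<Rightarrow>real) \<Rightarrow> nat \<Rightarrow> complex" where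
  "lam n y k = (\<Sum>p<n. of_real (y p) * om n ^ (k*p))"

lemma om_n: "n > 0 \<Longrightarrow> om n ^ n = 1"
  unfolding om_def DeMoivre by simp

lemma om_mod: assumes "n > 0" shows "om n ^ a = om n ^ (a mod n)"
proof -
  have "om n ^ a = om n ^ (a div n * n + a mod n)" by simp
  also have "\<dots> = (om n ^ n) ^ (a div n) * om n ^ (a mod n)"
    by (metis power_add power_mult mult.commute)
  finally show ?thesis using om_n[OF assms] by simp
qed

lemma lam_mult: assumes "n > 0"
  shows "lam n (pc_mult n u w) k = lam n u k * lam n w k"
proof -
  have "lam n (pc_mult n u w) k =
     (\<Sum>m<n. \<Sum>j<n. \<Sum>l<n. if (j + l) mod n = m then of_real (u j * w l) * om n ^ (k*m) else 0)"
    unfolding lam_def pc_mult_def of_real_sum sum_distrib_right by (intro sum.cong refl) auto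
  also have "\<dots> = (\<Sum>j<n. \<Sum>l<n. \<Sum>m<n. if (j + l) mod n = m then of_real (u j * w l) * om n ^ (k*m) else 0)"
    by (subst sum.swap, subst (2) sum.swap, rule refl)
  also have "\<dots> = (\<Sum>j<n. \<Sum>l<n. of_real (u j * w l) * om n ^ (k*((j+l) mod n)))"
    using assms by (simp add: sum.delta)
  also have "\<dots> = (\<Sum>j<n. \<Sum>l<n. (of_real (u j) * om n ^ (k*j)) * (of_real (w l) * om n ^ (k*l)))"
  proof (intro sum.cong refl)
    fix j l
    have "om n ^ (k*((j+l) mod n)) = om n ^ (k*(j+l))"
      using om_mod[OF assms, of "k*((j+l) mod n)"] om_mod[OF assms, of "k*(j+l)"]
      by (simp add: mod_mult_right_eq)
    then show "of_real (u j * w l) * om n ^ (k*((j+l) mod n)) = (of_real (u j) * om n ^ (k*j)) * (of_real (w l) * om n ^ (k*l))"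
      by (simp add: distrib_left power_add)
  qed
  also have "\<dots> = lam n u k * lam n w k"
    unfolding lam_def by (simp add: sum_product)
  finally show ?thesis .
qed

lemma lam_one: assumes "n > 0" shows "lam n pc_one k = 1"
proof -
  have "lam n pc_one k = (\<Sum>p<n. if p = 0 then 1 else 0)"
    unfolding lam_def pc_one_def by (intro sum.cong) auto
  then show ?thesis using assms by simp
qed

lemma lam_pow: "n > 0 \<Longrightarrow> lam n (pc_pow n u j) k = lam n u k ^ j"
  by (induction j) (simp_all add: lam_one lam_mult)

lemma root_sum: assumes "n > 0" "p < n" "m < n"
  shows "(\<Sum>k<n. (om n ^ p * cnj (om n) ^ m) ^ k) = (if p = m then of_nat n else 0)"
proof -
  define z where "z = om n ^ p * cnj (om n) ^ m"
  have z: "z = cis (2 * pi * (real p - real m) / real n)"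
    unfolding z_def om_def cis_cnj DeMoivre cis_mult by (rule arg_cong[where f=cis]) (simp add: diff_divide_distrib algebra_simps)
  have zn: "z ^ n = 1"
  proof -
    have "z ^ n = cis (2 * pi * (real p - real m))"
      unfolding z DeMoivre using assms by (intro arg_cong[where f=cis]) (simp add: field_simps)
    also have "\<dots> = 1"
      using cis_multiple_2pi[of "real p - real m"] by (simp add: Ints_diff)
    finally show ?thesis .
  qed
  have z1: "z = 1 \<longleftrightarrow> p = m"
  proof
    assume "z = 1"
    then have "cos (2 * pi * (real p - real m) / real n) = 1"
      unfolding z by (metis cis.sel(1) complex.sel(1) one_complex.code)
    then obtain N :: int where N: "2 * pi * (real p - real m) / real n = of_int N * 2 * pi"
      using cos_one_2pi_int by blast
    then have "(real p - real m) * (2*pi) = (of_int N * real n) * (2*pi)" using assms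
      by (simp add: field_simps)
    then have "real p - real m = of_int N * real n" by simp
    then have eq: "int p - int m = N * int n"
      by (metis of_int_eq_iff of_int_mult of_int_diff of_int_of_nat_eq)
    have "\<bar>int p - int m\<bar> < int n" using assms by linarith
    then have "\<bar>N\<bar> * int n < 1 * int n" using eq by (simp add: abs_mult)
    then have "\<bar>N\<bar> < 1" using assms by (simp only: mult_less_cancel_right)
    then have "N = 0" by simp
    then show "p = m" using eq by simp
  next
    assume "p = m" then show "z = 1" unfolding z by simp
  qed
  show ?thesis
    unfolding z_def[symmetric] using z1 zn by (simp add: sum_gp_strict)
qed

lemma inversion: assumes "n > 0" "m < n"
  shows "of_real (y m) = (1 / of_nat n) * (\<Sum>k<n. lam n y k * cnj (om n) ^ (k*m))"
proof -
  have "(\<Sum>k<n. lam n y k * cnj (om n) ^ (k*m)) =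
        (\<Sum>k<n. \<Sum>p<n. of_real (y p) * (om n ^ p * cnj (om n) ^ m) ^ k)"
    unfolding lam_def sum_distrib_right
    by (intro sum.cong refl) (simp add: power_mult_distrib power_mult[symmetric] mult.commute mult.assoc)
  also have "\<dots> = (\<Sum>p<n. of_real (y p) * (\<Sum>k<n. (om n ^ p * cnj (om n) ^ m) ^ k))"
    by (subst sum.swap) (simp add: sum_distrib_left)
  also have "\<dots> = (\<Sum>p<n. if p = m then of_real (y p) * of_nat n else 0)"
    using assms by (intro sum.cong refl) (simp add: root_sum)
  also have "\<dots> = of_real (y m) * of_nat n" using assms by simp
  finally show ?thesis using assms by simp
qed

lemma pow_repr: assumes "n > 0" "m < n"
  shows "of_real (pc_pow n x j m) = (1 / of_nat n) * (\<Sum>k<n. lam n x k ^ j * cnj (om n) ^ (k*m))"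
  using inversion[OF assms, of "pc_pow n x j"] by (simp add: lam_pow[OF assms(1)])

lemma series: assumes "n > 0" "m < n"
  shows "(\<lambda>j. pc_pow n x j m / fact j) sums Re ((1 / of_nat n) * (\<Sum>k<n. exp (lam n x k) * cnj (om n) ^ (k*m)))"
proof -
  have "(\<lambda>j. (1 / of_nat n) * (\<Sum>k<n. (lam n x k ^ j /\<^sub>R fact j) * cnj (om n) ^ (k*m))) sums
        ((1 / of_nat n) * (\<Sum>k<n. exp (lam n x k) * cnj (om n) ^ (k*m)))"
    by (intro sums_mult sums_sum sums_mult2 exp_converges)
  note S = sums_Re[OF this]
  have eq: "(\<lambda>j. pc_pow n x j m / fact j) = (\<lambda>j. Re ((1 / of_nat n) * (\<Sum>k<n. (lam n x k ^ j /\<^sub>R fact j) * cnj (om n) ^ (k*m))))"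
  proof
    fix j
    have "Re ((1 / of_nat n) * (\<Sum>k<n. (lam n x k ^ j /\<^sub>R fact j) * cnj (om n) ^ (k*m)))
        = Re (of_real (pc_pow n x j m) / of_real (fact j))"
      unfolding pow_repr[OF assms]
      by (simp add: scaleR_conv_of_real sum_divide_distrib field_simps)
    then show "pc_pow n x j m / fact j = Re ((1 / of_nat n) * (\<Sum>k<n. (lam n x k ^ j /\<^sub>R fact j) * cnj (om n) ^ (k*m)))"
      by (metis Re_complex_of_real of_real_divide)
  qed
  show ?thesis by (subst eq) (rule S)
qed

lemma om_pow: "om n ^ (k*p) = cis (2 * pi * real k * real p / real n)"
  unfolding om_def DeMoivre by (rule arg_cong[where f=cis]) simp

lemma cnj_om_pow: "cnj (om n) ^ (k*p) = cis (- (2 * pi * real k * real p / real n))"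
  unfolding om_def cis_cnj DeMoivre by (rule arg_cong[where f=cis]) simp

lemma lam_Re: "Re (lam n x k) = v_k n x k"
  unfolding lam_def v_k_def om_pow by (simp add: Re_sum)

lemma lam_Im: "Im (lam n x k) = vt_k n x k"
  unfolding lam_def vt_k_def om_pow by (simp add: Im_sum)

definition FF :: "nat \<Rightarrow> (nat \<Rightarrow> real) \<Rightarrow> nat \<Rightarrow> nat \<Rightarrow> real" where
  "FF n x m k = exp (v_k n x k) * (cos (vt_k n x k) * cos (2 * pi * real k * real m / real n)
      + sin (vt_k n x k) * sin (2 * pi * real k * real m / real n))"

lemma value_eq: "Re ((1 / of_nat n) * (\<Sum>k<n. exp (lam n x k) * cnj (om n) ^ (k*m)))
   = (1 / real n) * (\<Sum>k<n. FF n x m k)"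
proof -
  have "Re (exp (lam n x k) * cnj (om n) ^ (k*m)) = FF n x m k" for k
  proof -
    have "exp (lam n x k) * cnj (om n) ^ (k*m) = of_real (exp (v_k n x k)) * cis (vt_k n x k - 2 * pi * real k * real m / real n)"
      unfolding exp_eq_polar lam_Re lam_Im cnj_om_pow by (simp add: mult.assoc cis_mult)
    then show ?thesis unfolding FF_def by (simp add: cos_diff)
  qed
  then show ?thesis by (simp add: Re_sum)
qed

lemma refl_arg: assumes "k \<le> n" "n > 0"
  shows "cos (2 * pi * real (n - k) * real p / real n) = cos (2 * pi * real k * real p / real n)"
    and "sin (2 * pi * real (n - k) * real p / real n) = - sin (2 * pi * real k * real p / real n)"
proof -
  have e: "2 * pi * real (n - k) * real p / real n = 2 * pi * real p - 2 * pi * real k * real p / real n"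
    using assms by (simp add: of_nat_diff field_simps)
  have c: "cos (2 * pi * real p) = 1" "sin (2 * pi * real p) = 0"
    using cos_integer_2pi[of "real p"] sin_integer_2pi[of "real p"] by auto
  show "cos (2 * pi * real (n - k) * real p / real n) = cos (2 * pi * real k * real p / real n)"
    unfolding e cos_diff c by simp
  show "sin (2 * pi * real (n - k) * real p / real n) = - sin (2 * pi * real k * real p / real n)"
    unfolding e sin_diff c by simp
qed

lemma FF_sym: assumes "k \<le> n" "n > 0" shows "FF n x m (n - k) = FF n x m k"
proof -
  have "v_k n x (n - k) = v_k n x k" unfolding v_k_def using refl_arg[OF assms] by simp
  moreover have "vt_k n x (n - k) = - vt_k n x k" unfolding vt_k_def using refl_arg[OF assms]
    by (simp add: sum_negf)
  ultimately show ?thesis unfolding FF_def using refl_arg[OF assms] by simp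
qed

lemma reflect_sum: fixes F :: "nat \<Rightarrow> real"
  assumes "\<And>k. k \<le> n \<Longrightarrow> F (n - k) = F k" "a \<le> b" "b \<le> n"
  shows "(\<Sum>k\<in>{n-b..n-a}. F k) = (\<Sum>k\<in>{a..b}. F k)"
  by (rule sum.reindex_bij_witness[where i="\<lambda>k. n - k" and j="\<lambda>k. n - k"]) (use assms in auto)

lemma pair_odd: fixes F :: "nat \<Rightarrow> real"
  assumes "\<And>k. k \<le> n \<Longrightarrow> F (n - k) = F k" "odd n"
  shows "(\<Sum>k<n. F k) = F 0 + 2 * (\<Sum>k\<in>{1..(n - 1) div 2}. F k)"
proof -
  define h where "h = (n - 1) div 2"
  have n: "n = 2 * h + 1" using assms(2) unfolding h_def by presburger
  have "{..<n} = insert 0 ({1..h} \<union> {n-h..n-1})" using n by auto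
  then have "(\<Sum>k<n. F k) = F 0 + ((\<Sum>k\<in>{1..h}. F k) + (\<Sum>k\<in>{n-h..n-1}. F k))"
    using n by (simp add: sum.union_disjoint)
  also have "(\<Sum>k\<in>{n-h..n-1}. F k) = (\<Sum>k\<in>{1..h}. F k)"
  proof (cases "h = 0")
    case True then show ?thesis using n by simp
  next
    case False then show ?thesis using n by (intro reflect_sum assms(1)) auto
  qed
  finally show ?thesis unfolding h_def by simp
qed

lemma pair_even: fixes F :: "nat \<Rightarrow> real"
  assumes "\<And>k. k \<le> n \<Longrightarrow> F (n - k) = F k" "even n" "n \<ge> 2"
  shows "(\<Sum>k<n. F k) = F 0 + F (n div 2) + 2 * (\<Sum>k\<in>{1..n div 2 - 1}. F k)"
proof -
  define h where "h = n div 2 - 1"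
  have n: "n = 2 * h + 2" using assms(2,3) unfolding h_def by presburger
  have "{..<n} = insert 0 (insert (n div 2) ({1..h} \<union> {n-h..n-1}))" using n by auto
  then have "(\<Sum>k<n. F k) = F 0 + (F (n div 2) + ((\<Sum>k\<in>{1..h}. F k) + (\<Sum>k\<in>{n-h..n-1}. F k)))"
    using n by (simp add: sum.union_disjoint)
  also have "(\<Sum>k\<in>{n-h..n-1}. F k) = (\<Sum>k\<in>{1..h}. F k)"
  proof (cases "h = 0")
    case True then show ?thesis using n by simp
  next
    case False then show ?thesis using n by (intro reflect_sum assms(1)) auto
  qed
  finally show ?thesis unfolding h_def by simp
qed

lemma FF0: "n > 0 \<Longrightarrow> FF n x m 0 = exp (v_plus n x)"
  unfolding FF_def v_k_def vt_k_def v_plus_def by simp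

lemma half_arg: assumes "even n" "n > 0"
  shows "2 * pi * real (n div 2) * real p / real n = real p * pi"
proof -
  have "real (n div 2) = real n / 2" using assms by (simp add: real_of_nat_div)
  then show ?thesis using assms by (simp add: field_simps)
qed

lemma FFhalf: assumes "even n" "n > 0"
  shows "FF n x m (n div 2) = (-1) ^ m * exp (v_minus n x)"
  unfolding FF_def v_k_def vt_k_def v_minus_def half_arg[OF assms] by (simp add: mult.commute)

lemma FFk: assumes "m < n" "n > 0"
  shows "exp (v_k n x k) * (e_k n k m * cos (vt_k n x k) + et_k n k m * sin (vt_k n x k))
     = (2 / real n) * FF n x m k"
  unfolding FF_def e_k_def et_k_def using assms by (simp add: algebra_simps)

theorem mainTheorem12:
  fixes n :: nat and x :: "nat \<Rightarrow> real"
  assumes "n \<ge> 2"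
  shows "(even n \<longrightarrow> (\<forall>m<n. (\<lambda>j. pc_pow n x j m / fact j) sums
            (e_plus n m * exp (v_plus n x) + e_minus n m * exp (v_minus n x)
             + (\<Sum>k\<in>{1..n div 2 - 1}. exp (v_k n x k) *
                  (e_k n k m * cos (vt_k n x k) + et_k n k m * sin (vt_k n x k))))))
       \<and> (odd n \<longrightarrow> (\<forall>m<n. (\<lambda>j. pc_pow n x j m / fact j) sums
            (e_plus n m * exp (v_plus n x)
             + (\<Sum>k\<in>{1..(n - 1) div 2}. exp (v_k n x k) *
                  (e_k n k m * cos (vt_k n x k) + et_k n k m * sin (vt_k n x k))))))"
proof -
  have n0: "n > 0" using assms by simp
  have S: "(\<lambda>j. pc_pow n x j m / fact j) sums ((1 / real n) * (\<Sum>k<n. FF n x m k))" if "m < n" for m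
    using series[OF n0 that, of x] unfolding value_eq .
  have sym: "\<And>m k. k \<le> n \<Longrightarrow> FF n x m (n - k) = FF n x m k"
    using FF_sym n0 by blast
  show ?thesis
  proof (intro conjI impI allI)
    fix m assume ev: "even n" and m: "m < n"
    have "(1 / real n) * (\<Sum>k<n. FF n x m k) = e_plus n m * exp (v_plus n x) + e_minus n m * exp (v_minus n x)
             + (\<Sum>k\<in>{1..n div 2 - 1}. exp (v_k n x k) *
                  (e_k n k m * cos (vt_k n x k) + et_k n k m * sin (vt_k n x k)))"
      unfolding FFk[OF m n0] e_plus_def e_minus_def
      using m pair_even[where F="FF n x m", OF sym ev assms] FF0[OF n0, of x m] FFhalf[OF ev n0, of x m] by (simp add: sum_distrib_left sum_divide_distrib algebra_simps)
    then show "(\<lambda>j. pc_pow n x j m / fact j) sums (e_plus n m * exp (v_plus n x) + e_minus n m * exp (v_minus n x)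
             + (\<Sum>k\<in>{1..n div 2 - 1}. exp (v_k n x k) *
                  (e_k n k m * cos (vt_k n x k) + et_k n k m * sin (vt_k n x k))))"
      using S[OF m] by simp
  next
    fix m assume od: "odd n" and m: "m < n"
    have "(1 / real n) * (\<Sum>k<n. FF n x m k) = e_plus n m * exp (v_plus n x)
             + (\<Sum>k\<in>{1..(n - 1) div 2}. exp (v_k n x k) *
                  (e_k n k m * cos (vt_k n x k) + et_k n k m * sin (vt_k n x k)))"
      unfolding FFk[OF m n0] e_plus_def
      using m pair_odd[where F="FF n x m", OF sym od] FF0[OF n0, of x m] by (simp add: sum_distrib_left sum_divide_distrib algebra_simps)
    then show "(\<lambda>j. pc_pow n x j m / fact j) sums (e_plus n m * exp (v_plus n x)
             + (\<Sum>k\<in>{1..(n - 1) div 2}. exp (v_k n x k) *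
                  (e_k n k m * cos (vt_k n x k) + et_k n k m * sin (vt_k n x k))))"
      using S[OF m] by simp
  qed
qed

end
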